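(* Let $a=a_0+a_1e_1+a_2e_2+a_3e_3\in C\ell_2\setminus\mathbb{R}$ with $G(a)=0$. Then there exists $u\in C\ell_2\setminus Z(C\ell_2)$ such that $u^{-1}au=a_0+e_2+e_3$.
   Context: $C\ell_2$ is the 4-dimensional real associative algebra with basis $1,e_1,e_2,e_3$ and multiplication $e_1^2=e_2^2=1$, $e_3^2=-1$, $e_1e_2=e_3=-e_2e_1$, $e_1e_3=e_2=-e_3e_1$, $e_3e_2=e_1=-e_2e_3$; $\mathbb{R}$ is identified with $\mathbb{R}\cdot1$. For $a=a_0+a_1e_1+a_2e_2+a_3e_3$: $G(a)=a_1^2+a_2^2-a_3^2$, $H_a=a_0^2-a_1^2-a_2^2+a_3^2$; $Z(C\ell_2)=\{a:H_a=0\}$, and elements outside $Z(C\ell_2)$ are invertible. *)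

theory Defs
  imports Main "HOL.Real"
begin

text \<open>Elements a0 + a1 e1 + a2 e2 + a3 e3 of the Clifford algebra Cl_2.\<close>
datatype cl2 = Cl2 (c0: real) (c1: real) (c2: real) (c3: real)

text \<open>Multiplication determined by e1^2 = e2^2 = 1, e3^2 = -1, e1 e2 = e3 = - e2 e1,
  e1 e3 = e2 = - e3 e1, e3 e2 = e1 = - e2 e3, extended bilinearly.\<close>
definition cl2_mult :: "cl2 \<Rightarrow> cl2 \<Rightarrow> cl2" where
  "cl2_mult x y = Cl2
     (c0 x * c0 y + c1 x * c1 y + c2 x * c2 y - c3 x * c3 y)
     (c0 x * c1 y + c1 x * c0 y + c3 x * c2 y - c2 x * c3 y)
     (c0 x * c2 y + c2 x * c0 y + c1 x * c3 y - c3 x * c1 y)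
     (c0 x * c3 y + c3 x * c0 y + c1 x * c2 y - c2 x * c1 y)"

definition cl2_one :: cl2 where "cl2_one = Cl2 1 0 0 0"

definition cl2_of_real :: "real \<Rightarrow> cl2" where "cl2_of_real r = Cl2 r 0 0 0"

definition cl2_inv :: "cl2 \<Rightarrow> cl2" where
  "cl2_inv u = (THE v. cl2_mult u v = cl2_one \<and> cl2_mult v u = cl2_one)"

definition cl2_G :: "cl2 \<Rightarrow> real" where
  "cl2_G a = (c1 a)^2 + (c2 a)^2 - (c3 a)^2"

definition cl2_H :: "cl2 \<Rightarrow> real" where
  "cl2_H a = (c0 a)^2 - (c1 a)^2 - (c2 a)^2 + (c3 a)^2"

definition cl2_Z :: "cl2 set" where
  "cl2_Z = {a. cl2_H a = 0}"

end

theory Submission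
  imports Defs
begin

lemma cl2_eq_iff: "x = y \<longleftrightarrow> c0 x = c0 y \<and> c1 x = c1 y \<and> c2 x = c2 y \<and> c3 x = c3 y"
  by (cases x; cases y) auto

lemma mult_assoc: "cl2_mult (cl2_mult x y) z = cl2_mult x (cl2_mult y z)"
  unfolding cl2_mult_def cl2.sel cl2.inject by (simp add: algebra_simps)

lemma mult_one: "cl2_mult x cl2_one = x" "cl2_mult cl2_one x = x"
  by (simp_all add: cl2_mult_def cl2_one_def cl2_eq_iff)

definition cj :: "cl2 \<Rightarrow> cl2" where
  "cj u = Cl2 (c0 u / cl2_H u) (- c1 u / cl2_H u) (- c2 u / cl2_H u) (- c3 u / cl2_H u)"

lemma cj_inv:
  assumes "cl2_H u \<noteq> 0"
  shows "cl2_mult u (cj u) = cl2_one" "cl2_mult (cj u) u = cl2_one"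
proof -
  obtain u0 u1 u2 u3 where u: "u = Cl2 u0 u1 u2 u3" by (cases u)
  define h where "h = cl2_H u"
  have h: "h = u0*u0 - u1*u1 - u2*u2 + u3*u3" unfolding h_def u by (simp add: cl2_H_def power2_eq_square)
  have hn: "h \<noteq> 0" using assms h_def by simp
  have e: "(u0*u0 - u1*u1 - u2*u2 + u3*u3) / h = 1" using hn h by simp
  show "cl2_mult u (cj u) = cl2_one" "cl2_mult (cj u) u = cl2_one"
    unfolding cl2_mult_def cj_def cl2_one_def u h_def[unfolded u, symmetric]
    using e by (simp_all add: diff_divide_distrib add_divide_distrib algebra_simps)
qed

lemma inv_eq:
  assumes "cl2_H u \<noteq> 0"
  shows "cl2_inv u = cj u"
proof -
  have "\<And>v. cl2_mult u v = cl2_one \<and> cl2_mult v u = cl2_one \<Longrightarrow> v = cj u"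
  proof -
    fix v assume h: "cl2_mult u v = cl2_one \<and> cl2_mult v u = cl2_one"
    have "v = cl2_mult (cl2_mult (cj u) u) v" using cj_inv[OF assms] by (simp add: mult_one)
    also have "\<dots> = cl2_mult (cj u) (cl2_mult u v)" by (simp add: mult_assoc)
    also have "\<dots> = cj u" using h by (simp add: mult_one)
    finally show "v = cj u" .
  qed
  then show ?thesis unfolding cl2_inv_def
    by (intro the_equality conjI cj_inv[OF assms]) blast
qed

lemma conj_lemma:
  assumes "cl2_H u \<noteq> 0" and "cl2_mult a u = cl2_mult u b"
  shows "cl2_mult (cl2_mult (cl2_inv u) a) u = b"
proof -
  have "cl2_mult (cl2_mult (cj u) a) u = cl2_mult (cj u) (cl2_mult u b)"
    using assms(2) by (simp add: mult_assoc)
  also have "\<dots> = b" using cj_inv[OF assms(1)] by (simp add: mult_assoc[symmetric] mult_one)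
  finally show ?thesis using inv_eq[OF assms(1)] by simp
qed

lemma eqA: "a1^2 + a2^2 = (a3::real)^2 \<Longrightarrow> cl2_mult (Cl2 a0 a1 a2 a3) (Cl2 0 a1 (a2+1) (a3+1)) = cl2_mult (Cl2 0 a1 (a2+1) (a3+1)) (Cl2 a0 0 1 1)"
  unfolding cl2_mult_def cl2.sel cl2.inject
  by (simp add: algebra_simps power2_eq_square)

lemma eqB: "cl2_mult (Cl2 a0 0 a3 a3) (Cl2 (a3+1) (a3-1) 0 0) = cl2_mult (Cl2 (a3+1) (a3-1) 0 0) (Cl2 a0 0 1 1)"
  unfolding cl2_mult_def cl2.sel cl2.inject
  by (simp add: algebra_simps)

theorem proposition5p5:
  fixes a :: cl2
  assumes "a \<notin> range cl2_of_real"
    and "cl2_G a = 0"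
  shows "\<exists>u. u \<notin> cl2_Z \<and>
           cl2_mult (cl2_mult (cl2_inv u) a) u = Cl2 (c0 a) 0 1 1"
proof -
  obtain a0 a1 a2 a3 where a: "a = Cl2 a0 a1 a2 a3" by (cases a)
  have G: "a1^2 + a2^2 = a3^2" using assms(2) a by (simp add: cl2_G_def)
  have nr: "\<not> (a1 = 0 \<and> a2 = 0 \<and> a3 = 0)"
  proof
    assume "a1 = 0 \<and> a2 = 0 \<and> a3 = 0"
    then have "a = cl2_of_real a0" using a by (simp add: cl2_of_real_def)
    then show False using assms(1) by auto
  qed
  show ?thesis
  proof (cases "a2 = a3")
    case False
    let ?u = "Cl2 0 a1 (a2+1) (a3+1)"
    have H: "cl2_H ?u \<noteq> 0"
    proof -
      have "cl2_H ?u = 2 * (a3 - a2)" using G by (simp add: cl2_H_def power2_eq_square algebra_simps)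
      then show ?thesis using False by simp
    qed
    have "cl2_mult a ?u = cl2_mult ?u (Cl2 a0 0 1 1)"
      using eqA[OF G] a by simp
    then show ?thesis using conj_lemma[OF H] H a by (auto simp: cl2_Z_def)
  next
    case True
    then have "a1 = 0" using G by (simp add: power2_eq_square)
    then have a3: "a3 \<noteq> 0" using nr True by auto
    let ?u = "Cl2 (a3+1) (a3-1) 0 0"
    have H: "cl2_H ?u \<noteq> 0"
    proof -
      have "cl2_H ?u = 4 * a3" by (simp add: cl2_H_def power2_eq_square algebra_simps)
      then show ?thesis using a3 by simp
    qed
    have "cl2_mult a ?u = cl2_mult ?u (Cl2 a0 0 1 1)"
      using eqB[of a0 a3] True \<open>a1 = 0\<close> a by simp
    then show ?thesis using conj_lemma[OF H] H a by (auto simp: cl2_Z_def)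
  qed
qed

end
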